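(* Let $t$ be a positive integer. For every integer $n\ge8$ and every $n$-vertex induced subgraph $G$ of $\mathcal T(G_t)$ (hence in particular of $W_t$), there is a node $u$ of $T_t$ such that the number of descendants of $u$ in $T_t$ that belong to $V(G)$ is at least $\frac{n}{8\cdot 3^{t+1}}$ and at most $\frac n4$, and every node $v$ of $T_t$ in the same layer as $u$ has at most $\frac n4$ descendants in $V(G)$.
   Context: A node is its own descendant. Construction of $G_t$, $T_t$, $W_t$: a countably infinite trigraph $G_t$ (with disjoint sets of black and red edges; its total graph $\mathcal T(G_t)$ has all black and red edges, its real graph $W_t$ only the black ones) and rooted tree $T_t$ on the same vertex set, partitioned into finite layers $L_0,L_1,\dots$ each inducing a left-to-right path of black edges. $L_0$ is a single vertex, the root of $T_t$. With $L_{\le i}=L_0\cup\dots\cup L_i$, layer $L_{i+1}$ is built (starting empty) as follows: for each $u\in L_i$ from left to right, let $N^\uparrow[u]:=(N_{\mathcal T(G_t)}(u)\cap L_{\le i-1})\cup\{u\}$; for every ordered pair $(B,R)$ of disjoint subsets of $N^\uparrow[u]$ with $|B\cup R|\le t$, append a new vertex $v_{B,R}$ at the right end of $L_{i+1}$, joined by a black edge to the previously rightmost vertex of $L_{i+1}$ (if any), make it a child of $u$ in $T_t$, and add black edges from $v_{B,R}$ to all of $B$ and red edges to all of $R$. *)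

theory Defs
  imports Complex_Main "HOL-Library.FSet"
begin

text \<open>A node v_{B,R} created as child of u is identified with the term Child u B R.
  Thus the vertex identity is exactly (parent, B, R), as in the construction.\<close>

datatype node = Root | Child node "node fset" "node fset"

text \<open>Black edges from v_{B,R} to all of B; red edges from v_{B,R} to all of R.
  (The black left-to-right path edges inside each layer are not modelled; they join
  vertices of the same layer only, hence never contribute to the up-neighbourhood
  N^up, and the statement does not refer to them.)\<close>

definition black_BR :: "node \<Rightarrow> node \<Rightarrow> bool" where
  "black_BR x y \<longleftrightarrow> (\<exists>p B R. x = Child p B R \<and> y |\<in>| B) \<or> (\<exists>p B R. y = Child p B R \<and> x |\<in>| B)"

definition red_BR :: "node \<Rightarrow> node \<Rightarrow> bool" where
  "red_BR x y \<longleftrightarrow> (\<exists>p B R. x = Child p B R \<and> y |\<in>| R) \<or> (\<exists>p B R. y = Child p B R \<and> x |\<in>| R)"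

definition total_adj :: "node \<Rightarrow> node \<Rightarrow> bool" where
  "total_adj x y \<longleftrightarrow> black_BR x y \<or> red_BR x y"

text \<open>N^up[u] for u in layer i, where P = L_{<= i-1}.\<close>
definition Nup :: "node set \<Rightarrow> node \<Rightarrow> node set" where
  "Nup P u = {w \<in> P. total_adj u w} \<union> {u}"

text \<open>lev t i = (L_{<= i-1}, L_i).\<close>
primrec lev :: "nat \<Rightarrow> nat \<Rightarrow> node set \<times> node set" where
  "lev t 0 = ({}, {Root})"
| "lev t (Suc i) = (let P = fst (lev t i); L = snd (lev t i) in
     (P \<union> L,
      {Child u B R | u B R. u \<in> L \<and> B |\<inter>| R = {||}
          \<and> fset (B |\<union>| R) \<subseteq> Nup P u \<and> fcard (B |\<union>| R) \<le> t}))"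

definition layer :: "nat \<Rightarrow> nat \<Rightarrow> node set" where
  "layer t i = snd (lev t i)"

definition vertices :: "nat \<Rightarrow> node set" where
  "vertices t = (\<Union>i. layer t i)"

inductive is_desc :: "node \<Rightarrow> node \<Rightarrow> bool" where
  self: "is_desc u u"
| child: "is_desc u v \<Longrightarrow> is_desc u (Child v B R)"

end

theory Submission
  imports Defs "HOL-Library.FuncSet"
begin

primrec ndepth :: "node \<Rightarrow> nat" where
  "ndepth Root = 0"
| "ndepth (Child u B R) = Suc (ndepth u)"

lemma fst_lev: "fst (lev t j) = (\<Union>k<j. layer t k)"
  by (induction j) (auto simp: layer_def Let_def lessThan_Suc)

lemma layer0: "layer t 0 = {Root}"
  by (simp add: layer_def)

lemma layerSuc: "u \<in> layer t (Suc j) \<longleftrightarrow> (\<exists>p B R. u = Child p B R \<and> p \<in> layer t j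
   \<and> B |\<inter>| R = {||} \<and> fset (B |\<union>| R) \<subseteq> Nup (fst (lev t j)) p \<and> fcard (B |\<union>| R) \<le> t)"
  by (auto simp: layer_def Let_def)

lemma layer_depth: "u \<in> layer t j \<Longrightarrow> ndepth u = j"
proof (induction j arbitrary: u)
  case 0 then show ?case by (simp add: layer0)
next
  case (Suc j) then show ?case by (auto simp: layerSuc)
qed

lemma layer_elem_depth:
  assumes "Child p B R \<in> layer t j" "y \<in> fset B \<union> fset R"
  shows "ndepth y < j"
proof (cases j)
  case 0 then show ?thesis using assms by (simp add: layer0)
next
  case (Suc j')
  then have p: "p \<in> layer t j'" and sub: "fset (B |\<union>| R) \<subseteq> Nup (fst (lev t j')) p"
    using assms(1) by (auto simp: layerSuc)
  have "y \<in> Nup (fst (lev t j')) p" using sub assms(2) by auto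
  then have "y = p \<or> (\<exists>k<j'. y \<in> layer t k)" by (auto simp: Nup_def fst_lev)
  then show ?thesis using p Suc layer_depth by fastforce
qed

definition NN :: "node \<Rightarrow> node set" where
  "NN x = insert x (case x of Root \<Rightarrow> {} | Child p B R \<Rightarrow> fset B \<union> fset R)"

lemma Nup_sub:
  assumes "x \<in> layer t j"
  shows "Nup (fst (lev t j)) x \<subseteq> NN x"
proof
  fix w assume "w \<in> Nup (fst (lev t j)) x"
  then consider "w = x" | "w \<in> fst (lev t j)" "total_adj x w" by (auto simp: Nup_def)
  then show "w \<in> NN x"
  proof cases
    case 1 then show ?thesis by (simp add: NN_def)
  next
    case 2
    then obtain k where k: "k < j" "w \<in> layer t k" by (auto simp: fst_lev)
    have dx: "ndepth x = j" using assms layer_depth by blast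
    from 2(2) show ?thesis
    proof (unfold total_adj_def black_BR_def red_BR_def, elim disjE exE conjE)
      fix p B R assume "w = Child p B R" "x |\<in>| B"
      then have "ndepth x < k" using k layer_elem_depth by blast
      then show ?thesis using dx k by simp
    next
      fix p B R assume "w = Child p B R" "x |\<in>| R"
      then have "ndepth x < k" using k layer_elem_depth by blast
      then show ?thesis using dx k by simp
    qed (auto simp: NN_def)
  qed
qed

lemma NN_card:
  assumes "x \<in> layer t j" "t \<ge> 1"
  shows "finite (NN x) \<and> card (NN x) \<le> t + 1"
proof (cases x)
  case Root then show ?thesis using assms by (simp add: NN_def)
next
  case (Child p B R)
  then obtain j' where j: "j = Suc j'" using assms by (cases j) (auto simp: layer0)
  then have "fcard (B |\<union>| R) \<le> t" using assms Child by (auto simp: layerSuc)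
  then have c: "card (fset B \<union> fset R) \<le> t" by (simp add: fcard.rep_eq)
  have "card (NN x) \<le> Suc (card (fset B \<union> fset R))"
    unfolding NN_def Child by (simp add: card_insert_le_m1 card_insert_if)
  then show ?thesis using c Child by (simp add: NN_def)
qed

lemma desc_depth: "is_desc u v \<Longrightarrow> ndepth u \<le> ndepth v"
  by (induction rule: is_desc.induct) auto

lemma root_desc: "v \<in> layer t i \<Longrightarrow> is_desc Root v"
proof (induction i arbitrary: v)
  case 0 then show ?case by (simp add: layer0 is_desc.self)
next
  case (Suc i) then show ?case by (auto simp: layerSuc intro: is_desc.child)
qed

lemma vert_parent: "Child v B R \<in> vertices t \<Longrightarrow> v \<in> vertices t"
proof -
  assume "Child v B R \<in> vertices t"
  then obtain i where "Child v B R \<in> layer t i" by (auto simp: vertices_def)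
  then show ?thesis by (cases i) (auto simp: layer0 layerSuc vertices_def)
qed

lemma desc_vert: "is_desc u v \<Longrightarrow> v \<in> vertices t \<Longrightarrow> u \<in> vertices t"
  by (induction rule: is_desc.induct) (auto dest: vert_parent)

lemma desc_split: "is_desc u v \<Longrightarrow> v = u \<or> (\<exists>B R. is_desc (Child u B R) v)"
proof (induction rule: is_desc.induct)
  case (self u) then show ?case by simp
next
  case (child u v B R)
  then show ?case by (auto intro: is_desc.intros)
qed

lemma card_children:
  assumes "x \<in> layer t i" "t \<ge> 1"
  shows "finite {c \<in> layer t (Suc i). \<exists>B R. c = Child x B R}
     \<and> card {c \<in> layer t (Suc i). \<exists>B R. c = Child x B R} \<le> 3 ^ (t + 1)"
proof -
  let ?C = "{c \<in> layer t (Suc i). \<exists>B R. c = Child x B R}"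
  let ?N = "NN x"
  have fN: "finite ?N" and cN: "card ?N \<le> t + 1" using NN_card assms by auto
  let ?g = "\<lambda>h. Child x (Abs_fset {y\<in>?N. h y = (0::nat)}) (Abs_fset {y\<in>?N. h y = 1})"
  have sub: "?C \<subseteq> ?g ` (?N \<rightarrow>\<^sub>E {0,1,2})"
  proof
    fix c assume "c \<in> ?C"
    then obtain B R where c: "c = Child x B R" and dis: "B |\<inter>| R = {||}"
      and s: "fset (B |\<union>| R) \<subseteq> Nup (fst (lev t i)) x"
      by (auto simp: layerSuc)
    have s2: "fset B \<subseteq> ?N" "fset R \<subseteq> ?N" using s Nup_sub[OF assms(1)] by auto
    define h where "h = restrict (\<lambda>y. if y \<in> fset B then 0 else if y \<in> fset R then 1 else (2::nat)) ?N"
    have h: "h \<in> ?N \<rightarrow>\<^sub>E {0,1,2}" by (auto simp: h_def)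
    have e1: "{y\<in>?N. h y = 0} = fset B" using s2 by (auto simp: h_def)
    have dj: "fset B \<inter> fset R = {}" using dis
      by (metis inf_fset.rep_eq bot_fset.rep_eq)
    have e2: "{y\<in>?N. h y = 1} = fset R" using s2 dj
      by (auto simp: h_def)
    have "?g h = c" unfolding e1 e2 c by (simp add: fset_inverse)
    then show "c \<in> ?g ` (?N \<rightarrow>\<^sub>E {0,1,2})" using h by blast
  qed
  have fP: "finite (?N \<rightarrow>\<^sub>E {0::nat,1,2})" using fN by (simp add: finite_PiE)
  have "card (?N \<rightarrow>\<^sub>E {0::nat,1,2}) = 3 ^ card ?N" using fN by (simp add: card_PiE numeral_3_eq_3)
  also have "\<dots> \<le> 3 ^ (t+1)" using cN by (intro power_increasing) auto
  finally have "card (?g ` (?N \<rightarrow>\<^sub>E {0,1,2})) \<le> 3 ^ (t+1)"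
    using card_image_le[OF fP, of ?g] by linarith
  then show ?thesis using sub fP card_mono[OF finite_imageI[OF fP] sub]
    by (meson finite_imageI finite_subset le_trans)
qed

theorem lemma4p8:
  fixes t n :: nat and S :: "node set"
  assumes "t \<ge> 1" and "n \<ge> 8"
    and "S \<subseteq> vertices t" and "finite S" and "card S = n"
  shows "\<exists>i u. u \<in> layer t i
    \<and> real n / (8 * 3 ^ (t + 1)) \<le> real (card {v \<in> S. is_desc u v})
    \<and> real (card {v \<in> S. is_desc u v}) \<le> real n / 4
    \<and> (\<forall>w \<in> layer t i. real (card {v \<in> S. is_desc w v}) \<le> real n / 4)"
proof -
  define f where "f u = card {v \<in> S. is_desc u v}" for u
  define I where "I = {i. \<exists>u\<in>layer t i. real n / 4 < real (f u)}"
  have Sne: "S \<noteq> {}" using assms by auto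
  define D where "D = Max (ndepth ` S)"
  have fRoot: "f Root = n"
  proof -
    have "{v \<in> S. is_desc Root v} = S"
      using assms(3) root_desc by (auto simp: vertices_def)
    then show ?thesis using assms(5) by (simp add: f_def)
  qed
  have "0 \<in> I" unfolding I_def using fRoot assms(2) by (auto simp: layer0)
  have Ibd: "I \<subseteq> {..D}"
  proof
    fix i assume "i \<in> I"
    then obtain u where u: "u \<in> layer t i" "real n / 4 < real (f u)" by (auto simp: I_def)
    then have "f u \<noteq> 0" using assms(2) by auto
    then obtain v where v: "v \<in> S" "is_desc u v"
      unfolding f_def by (metis (no_types, lifting) card.empty empty_Collect_eq)
    have "ndepth v \<le> D" unfolding D_def using v assms(4) by auto
    then show "i \<in> {..D}" using desc_depth[OF v(2)] layer_depth[OF u(1)] by simp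
  qed
  define i0 where "i0 = Max I"
  have fI: "finite I" using Ibd finite_subset by blast
  have "i0 \<in> I" unfolding i0_def using fI \<open>0 \<in> I\<close> by (metis Max_in empty_iff)
  then obtain x where x: "x \<in> layer t i0" "real n / 4 < real (f x)" by (auto simp: I_def)
  have "Suc i0 \<notin> I" using fI i0_def by (metis Max_ge Suc_n_not_le_n)
  then have small: "\<forall>w\<in>layer t (Suc i0). real (f w) \<le> real n / 4"
    by (auto simp: I_def not_less)
  define C where "C = {c \<in> layer t (Suc i0). \<exists>B R. c = Child x B R}"
  have fC: "finite C" and cC: "card C \<le> 3 ^ (t+1)"
    using card_children[OF x(1) assms(1)] by (auto simp: C_def)
  have subU: "{v \<in> S. is_desc x v} \<subseteq> ({x} \<inter> S) \<union> (\<Union>c\<in>C. {v \<in> S. is_desc c v})"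
  proof
    fix v assume v: "v \<in> {v \<in> S. is_desc x v}"
    show "v \<in> ({x} \<inter> S) \<union> (\<Union>c\<in>C. {v \<in> S. is_desc c v})"
    proof (cases "v = x")
      case True then show ?thesis using v by auto
    next
      case False
      then obtain B R where d: "is_desc (Child x B R) v" using desc_split v by blast
      have "v \<in> vertices t" using v assms(3) by auto
      then have "Child x B R \<in> vertices t" using desc_vert d by blast
      then obtain k where k: "Child x B R \<in> layer t k" by (auto simp: vertices_def)
      have "k = Suc i0" using layer_depth[OF k] layer_depth[OF x(1)] by simp
      then have "Child x B R \<in> C" using k by (auto simp: C_def)
      then show ?thesis using d v by blast
    qed
  qed
  have "f x \<le> card (({x} \<inter> S) \<union> (\<Union>c\<in>C. {v \<in> S. is_desc c v}))"
    unfolding f_def using subU fC assms(4) by (intro card_mono) auto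
  also have "\<dots> \<le> card ({x} \<inter> S) + card (\<Union>c\<in>C. {v \<in> S. is_desc c v})"
    by (rule card_Un_le)
  also have "\<dots> \<le> 1 + (\<Sum>c\<in>C. f c)"
  proof -
    have "card ({x} \<inter> S) \<le> 1" by (simp add: card_le_Suc0_iff_eq)
    moreover have "card (\<Union>c\<in>C. {v \<in> S. is_desc c v}) \<le> (\<Sum>c\<in>C. f c)"
      unfolding f_def using fC by (rule card_UN_le)
    ultimately show ?thesis by linarith
  qed
  finally have fx: "f x \<le> 1 + (\<Sum>c\<in>C. f c)" .
  have sumbig: "real n / 8 < (\<Sum>c\<in>C. real (f c))"
  proof -
    have "real (f x) \<le> 1 + real (\<Sum>c\<in>C. f c)" using fx by linarith
    then show ?thesis using x(2) assms(2) by (simp add: of_nat_sum)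
  qed
  define q where "q = real n / (8 * 3 ^ (t + 1))"
  have "\<exists>c\<in>C. q \<le> real (f c)"
  proof (rule ccontr)
    assume "\<not> ?thesis"
    then have lt: "\<forall>c\<in>C. real (f c) < q" by auto
    have "C \<noteq> {}" using sumbig assms(2) by (auto)
    then have "(\<Sum>c\<in>C. real (f c)) < (\<Sum>c\<in>C. q)"
      using fC lt by (intro sum_strict_mono) auto
    also have "\<dots> = real (card C) * q" by simp
    also have "\<dots> \<le> 3 ^ (t+1) * q"
    proof -
      have "real (card C) \<le> 3 ^ (t+1)" using cC
        by (metis of_nat_le_iff of_nat_numeral of_nat_power)
      moreover have "q \<ge> 0" by (simp add: q_def)
      ultimately show ?thesis by (rule mult_right_mono)
    qed
    also have "\<dots> = real n / 8" by (simp add: q_def)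
    finally show False using sumbig by linarith
  qed
  then obtain c where c: "c \<in> C" "q \<le> real (f c)" by blast
  have cl: "c \<in> layer t (Suc i0)" using c by (auto simp: C_def)
  show ?thesis
    using c cl small unfolding q_def f_def by blast
qed

end
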